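(* Let $V, L \ge 1$ be integers, $[V]=\{1,\dots,V\}$, and $\mathcal{D}=[V]^L$ the set of sequences $x=(x^1,\dots,x^L)$. Let $\pi(x_0,x_1)$ be a joint probability distribution on $\mathcal{D}\times\mathcal{D}$ with marginals $p(x_0)=\sum_{x_1}\pi(x_0,x_1)$ and $q(x_1)=\sum_{x_0}\pi(x_0,x_1)$. Let $\kappa:[0,1]\to[0,1]$ be a differentiable scheduler with $\kappa_0=0$, $\kappa_1=1$ and $\kappa_t<1$ for $t<1$. Define the conditional flow $$p_t(x\mid x_0,x_1)=\prod_{i=1}^L\Big[(1-\kappa_t)\,\delta_{x_0^i}(x^i)+\kappa_t\,\delta_{x_1^i}(x^i)\Big],$$ the flow $p_t(x)=\sum_{x_0,x_1\in\mathcal{D}}p_t(x\mid x_0,x_1)\,\pi(x_0,x_1)$ (which transforms $p$ into $q$), the conditional probability velocities $$u_t^i(x^i,z\mid x_0,x_1)=\frac{\dot\kappa_t}{1-\kappa_t}\big[\delta_{x_1^i}(x^i)-\delta_{z^i}(x^i)\big],\quad x^i\in[V],\ z\in\mathcal{D},$$ and the (marginal) probability velocity $$u_t^i(x^i,z)=\sum_{x_0,x_1\in\mathcal{D}}u_t^i(x^i,z\mid x_0,x_1)\,p_t(x_0,x_1\mid z),\qquad p_t(x_0,x_1\mid z)=\frac{p_t(z\mid x_0,x_1)\pi(x_0,x_1)}{p_t(z)}.$$ Let $s:[V]\times[V]\to[0,\infty)$ be a similarity metric between tokens (in particular symmetric, with $s(a,a)=0$). Then $$\int_0^1\sum_{x_t\in\mathcal{D}}p_t(x_t)\Big[\sum_{i=1}^L\sum_{x^i\neq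 x_t^i}u_t^i(x^i,x_t)\,s(x^i,x_t^i)\Big]dt=\sum_{x_0,x_1\in\mathcal{D}}c(x_0,x_1)\,\pi(x_0,x_1),\qquad c(x_0,x_1)=\sum_{i=1}^L s(x_0^i,x_1^i).$$ That is, this dynamic objective equals the Kantorovich transport cost of the coupling $\pi$ with cost function $c$.
   Context: $\delta_a(b)$ equals $1$ if $a=b$ and $0$ otherwise; $x^i$ denotes the $i$-th entry of a sequence $x\in[V]^L$, and $\dot\kappa_t$ is the time derivative of $\kappa_t$. Terms of the outer sum with $p_t(x_t)=0$ contribute zero. The left-hand side is called the categorical dynamic formulation: it is the expected outflow of probability mass from the current state over time, with each outflow to token $x^i$ weighted by $s(x^i,x_t^i)$. *)

theory Defs
  imports "HOL-Analysis.Analysis"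
begin

text \<open>Sequences of length L over the token set [V] = {1..V}; positions are indexed 0..L-1.\<close>
definition seqs :: "nat \<Rightarrow> nat \<Rightarrow> nat list set" where
  "seqs V L = {x. length x = L \<and> set x \<subseteq> {1..V}}"

definition delta :: "nat \<Rightarrow> nat \<Rightarrow> real" where
  "delta a b = (if a = b then 1 else 0)"

definition cond_flow :: "nat \<Rightarrow> (real \<Rightarrow> real) \<Rightarrow> real \<Rightarrow> nat list \<Rightarrow> nat list \<Rightarrow> nat list \<Rightarrow> real" where
  "cond_flow L \<kappa> t x x0 x1 =
     (\<Prod>i<L. (1 - \<kappa> t) * delta (x0 ! i) (x ! i) + \<kappa> t * delta (x1 ! i) (x ! i))"

definition flow :: "nat \<Rightarrow> nat \<Rightarrow> (real \<Rightarrow> real) \<Rightarrow> (nat list \<Rightarrow> nat list \<Rightarrow> real) \<Rightarrow> real \<Rightarrow> nat list \<Rightarrow> real" where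
  "flow V L \<kappa> \<pi> t x = (\<Sum>x0\<in>seqs V L. \<Sum>x1\<in>seqs V L. cond_flow L \<kappa> t x x0 x1 * \<pi> x0 x1)"

text \<open>Conditional probability velocity u_t^i(a, z | x0, x1); \<kappa>' is the derivative of \<kappa>.\<close>
definition cond_vel :: "(real \<Rightarrow> real) \<Rightarrow> (real \<Rightarrow> real) \<Rightarrow> real \<Rightarrow> nat \<Rightarrow> nat \<Rightarrow> nat list \<Rightarrow> nat list \<Rightarrow> nat list \<Rightarrow> real" where
  "cond_vel \<kappa> \<kappa>' t i a z x0 x1 = \<kappa>' t / (1 - \<kappa> t) * (delta (x1 ! i) a - delta (z ! i) a)"

definition posterior :: "nat \<Rightarrow> nat \<Rightarrow> (real \<Rightarrow> real) \<Rightarrow> (nat list \<Rightarrow> nat list \<Rightarrow> real) \<Rightarrow> real \<Rightarrow> nat list \<Rightarrow> nat list \<Rightarrow> nat list \<Rightarrow> real" where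
  "posterior V L \<kappa> \<pi> t x0 x1 z = cond_flow L \<kappa> t z x0 x1 * \<pi> x0 x1 / flow V L \<kappa> \<pi> t z"

definition vel :: "nat \<Rightarrow> nat \<Rightarrow> (real \<Rightarrow> real) \<Rightarrow> (real \<Rightarrow> real) \<Rightarrow> (nat list \<Rightarrow> nat list \<Rightarrow> real) \<Rightarrow> real \<Rightarrow> nat \<Rightarrow> nat \<Rightarrow> nat list \<Rightarrow> real" where
  "vel V L \<kappa> \<kappa>' \<pi> t i a z =
     (\<Sum>x0\<in>seqs V L. \<Sum>x1\<in>seqs V L. cond_vel \<kappa> \<kappa>' t i a z x0 x1 * posterior V L \<kappa> \<pi> t x0 x1 z)"

definition cost :: "nat \<Rightarrow> (nat \<Rightarrow> nat \<Rightarrow> real) \<Rightarrow> nat list \<Rightarrow> nat list \<Rightarrow> real" where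
  "cost L s x0 x1 = (\<Sum>i<L. s (x0 ! i) (x1 ! i))"

end

theory Submission
  imports Defs
begin

lemma seqs_Suc: "seqs V (Suc L) = (\<lambda>(a,xs). a#xs) ` ({1..V} \<times> seqs V L)"
  unfolding seqs_def by (auto simp: length_Suc_conv image_iff)

lemma finite_seqs: "finite (seqs V L)"
proof -
  have "seqs V L = {xs. set xs \<subseteq> {1..V} \<and> length xs = L}" unfolding seqs_def by auto
  then show ?thesis using finite_lists_length_eq[of "{1..V}" L] by simp
qed

lemma sum_prod_seqs:
  fixes g :: "nat \<Rightarrow> nat \<Rightarrow> real"
  shows "(\<Sum>x\<in>seqs V L. \<Prod>j<L. g j (x!j)) = (\<Prod>j<L. \<Sum>b\<in>{1..V}. g j b)"
proof (induction L arbitrary: g)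
  case 0
  have "seqs V 0 = {[]}" unfolding seqs_def by auto
  then show ?case by simp
next
  case (Suc L)
  have inj: "inj_on (\<lambda>(a,xs). a#xs) ({1..V} \<times> seqs V L)" by (auto simp: inj_on_def)
  have "(\<Sum>x\<in>seqs V (Suc L). \<Prod>j<Suc L. g j (x!j))
     = (\<Sum>(a,xs)\<in>{1..V} \<times> seqs V L. \<Prod>j<Suc L. g j ((a#xs)!j))"
    unfolding seqs_Suc by (subst sum.reindex[OF inj]) (simp add: case_prod_unfold)
  also have "\<dots> = (\<Sum>a\<in>{1..V}. \<Sum>xs\<in>seqs V L. g 0 a * (\<Prod>j<L. g (Suc j) (xs!j)))"
    by (subst sum.cartesian_product[symmetric]) (simp only: prod.lessThan_Suc_shift nth_Cons_0 nth_Cons_Suc)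
  also have "\<dots> = (\<Sum>a\<in>{1..V}. g 0 a * (\<Prod>j<L. \<Sum>b\<in>{1..V}. g (Suc j) b))"
    by (intro sum.cong refl) (simp only: sum_distrib_left[symmetric] Suc.IH[of "\<lambda>j. g (Suc j)"])
  also have "\<dots> = (\<Prod>j<Suc L. \<Sum>b\<in>{1..V}. g j b)"
    by (simp only: prod.lessThan_Suc_shift sum_distrib_right)
  finally show ?case .
qed

lemma marg:
  fixes c :: "nat \<Rightarrow> nat \<Rightarrow> real"
  assumes "i < L"
  shows "(\<Sum>x\<in>seqs V L. (\<Prod>j<L. c j (x!j)) * f (x!i))
       = (\<Sum>b\<in>{1..V}. c i b * f b) * (\<Prod>j\<in>{..<L}-{i}. \<Sum>b\<in>{1..V}. c j b)"
proof -
  have "(\<Sum>x\<in>seqs V L. (\<Prod>j<L. c j (x!j)) * f (x!i))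
     = (\<Sum>x\<in>seqs V L. \<Prod>j<L. c j (x!j) * (if j = i then f (x!j) else 1))"
    using assms by (simp add: prod.distrib prod.delta)
  also have "\<dots> = (\<Prod>j<L. \<Sum>b\<in>{1..V}. c j b * (if j = i then f b else 1))"
    by (rule sum_prod_seqs)
  also have "\<dots> = (\<Sum>b\<in>{1..V}. c i b * f b) * (\<Prod>j\<in>{..<L}-{i}. \<Sum>b\<in>{1..V}. c j b)"
    using assms by (subst prod.remove[of _ i]) (auto intro!: prod.cong)
  finally show ?thesis .
qed

lemma seqs_nth: "x \<in> seqs V L \<Longrightarrow> i < L \<Longrightarrow> x ! i \<in> {1..V}"
  unfolding seqs_def by (auto dest!: nth_mem)

lemma cf_nonneg: "0 \<le> \<kappa> t \<Longrightarrow> \<kappa> t \<le> 1 \<Longrightarrow> 0 \<le> cond_flow L \<kappa> t x x0 x1"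
  unfolding cond_flow_def delta_def by (intro prod_nonneg) auto

lemma fv:
  assumes pi: "\<And>x0 x1. x0 \<in> seqs V L \<Longrightarrow> x1 \<in> seqs V L \<Longrightarrow> \<pi> x0 x1 \<ge> 0"
    and k: "0 \<le> \<kappa> t" "\<kappa> t \<le> 1"
  shows "flow V L \<kappa> \<pi> t xt * vel V L \<kappa> \<kappa>' \<pi> t i a xt
    = (\<Sum>x0\<in>seqs V L. \<Sum>x1\<in>seqs V L. cond_vel \<kappa> \<kappa>' t i a xt x0 x1 * cond_flow L \<kappa> t xt x0 x1 * \<pi> x0 x1)"
proof (cases "flow V L \<kappa> \<pi> t xt = 0")
  case True
  have nn: "\<And>x0 x1. x0 \<in> seqs V L \<Longrightarrow> x1 \<in> seqs V L \<Longrightarrow> 0 \<le> cond_flow L \<kappa> t xt x0 x1 * \<pi> x0 x1"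
    using pi cf_nonneg[where \<kappa>=\<kappa> and t=t, OF k(1) k(2)] by simp
  have "\<forall>x0\<in>seqs V L. (\<Sum>x1\<in>seqs V L. cond_flow L \<kappa> t xt x0 x1 * \<pi> x0 x1) = 0"
    using True unfolding flow_def
    by (subst sum_nonneg_eq_0_iff[symmetric]) (auto simp: finite_seqs nn intro!: sum_nonneg)
  then have z: "cond_flow L \<kappa> t xt x0 x1 * \<pi> x0 x1 = 0" if "x0 \<in> seqs V L" "x1 \<in> seqs V L" for x0 x1
  proof -
    have "(\<Sum>x1\<in>seqs V L. cond_flow L \<kappa> t xt x0 x1 * \<pi> x0 x1) = 0" using that \<open>\<forall>x0\<in>_. _\<close> by blast
    then have "\<forall>x1\<in>seqs V L. cond_flow L \<kappa> t xt x0 x1 * \<pi> x0 x1 = 0"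
      using sum_nonneg_eq_0_iff[OF finite_seqs, where f="\<lambda>x1. cond_flow L \<kappa> t xt x0 x1 * \<pi> x0 x1"] nn[OF that(1)] by blast
    then show ?thesis using that by blast
  qed
  have "vel V L \<kappa> \<kappa>' \<pi> t i a xt = 0"
    unfolding vel_def posterior_def True by simp
  moreover have "(\<Sum>x0\<in>seqs V L. \<Sum>x1\<in>seqs V L. cond_vel \<kappa> \<kappa>' t i a xt x0 x1 * cond_flow L \<kappa> t xt x0 x1 * \<pi> x0 x1) = 0"
    by (intro sum.neutral ballI) (simp only: mult.assoc z mult_zero_right)
  ultimately show ?thesis by simp
next
  case False
  have "flow V L \<kappa> \<pi> t xt * vel V L \<kappa> \<kappa>' \<pi> t i a xt
    = (\<Sum>x0\<in>seqs V L. \<Sum>x1\<in>seqs V L. flow V L \<kappa> \<pi> t xt * (cond_vel \<kappa> \<kappa>' t i a xt x0 x1 * (cond_flow L \<kappa> t xt x0 x1 * \<pi> x0 x1 / flow V L \<kappa> \<pi> t xt)))"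
    unfolding vel_def posterior_def by (simp only: sum_distrib_left)
  also have "\<dots> = (\<Sum>x0\<in>seqs V L. \<Sum>x1\<in>seqs V L. cond_vel \<kappa> \<kappa>' t i a xt x0 x1 * cond_flow L \<kappa> t xt x0 x1 * \<pi> x0 x1)"
    using False by (intro sum.cong refl) (simp add: field_simps)
  finally show ?thesis .
qed

lemma sum_delta: "c \<in> {1..V} \<Longrightarrow> (\<Sum>b\<in>{1..V}. delta c b * f b) = f c"
proof -
  assume c: "c \<in> {1..V}"
  have "(\<Sum>b\<in>{1..V}. delta c b * f b) = (\<Sum>b\<in>{1..V}. if c = b then f b else 0)"
    by (intro sum.cong refl) (simp add: delta_def)
  also have "\<dots> = f c" using c by (simp only: sum.delta' finite_atLeastAtMost if_True)
  finally show ?thesis .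
qed

lemma sum_delta1: "c \<in> {1..V} \<Longrightarrow> (\<Sum>b\<in>{1..V}. delta c b) = 1"
  using sum_delta[of c V "\<lambda>_. 1"] by simp

lemma marg2:
  assumes "x0 \<in> seqs V L" "x1 \<in> seqs V L" "i < L"
  shows "(\<Sum>xt\<in>seqs V L. cond_flow L \<kappa> t xt x0 x1 * G (xt!i))
     = (1 - \<kappa> t) * G (x0!i) + \<kappa> t * G (x1!i)"
proof -
  let ?c = "\<lambda>j b. (1 - \<kappa> t) * delta (x0 ! j) b + \<kappa> t * delta (x1 ! j) b"
  have "(\<Sum>xt\<in>seqs V L. cond_flow L \<kappa> t xt x0 x1 * G (xt!i))
     = (\<Sum>b\<in>{1..V}. ?c i b * G b) * (\<Prod>j\<in>{..<L}-{i}. \<Sum>b\<in>{1..V}. ?c j b)"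
    unfolding cond_flow_def by (rule marg[OF assms(3)])
  also have "(\<Prod>j\<in>{..<L}-{i}. \<Sum>b\<in>{1..V}. ?c j b) = 1"
  proof (rule prod.neutral, rule ballI)
    fix j assume "j \<in> {..<L}-{i}"
    then have "x0 ! j \<in> {1..V}" "x1 ! j \<in> {1..V}" using assms seqs_nth by auto
    then show "(\<Sum>b\<in>{1..V}. ?c j b) = 1"
      by (simp only: sum.distrib sum_distrib_left[symmetric] sum_delta1) simp
  qed
  also have "(\<Sum>b\<in>{1..V}. ?c i b * G b) = (1 - \<kappa> t) * G (x0!i) + \<kappa> t * G (x1!i)"
  proof -
    have "(\<Sum>b\<in>{1..V}. ?c i b * G b) = (\<Sum>b\<in>{1..V}. (1 - \<kappa> t) * (delta (x0 ! i) b * G b) + \<kappa> t * (delta (x1 ! i) b * G b))"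
      by (intro sum.cong refl) (simp add: algebra_simps)
    also have "\<dots> = (1 - \<kappa> t) * (\<Sum>b\<in>{1..V}. delta (x0 ! i) b * G b) + \<kappa> t * (\<Sum>b\<in>{1..V}. delta (x1 ! i) b * G b)"
      by (simp only: sum.distrib sum_distrib_left)
    also have "\<dots> = (1 - \<kappa> t) * G (x0!i) + \<kappa> t * G (x1!i)"
      using seqs_nth[OF assms(1,3)] seqs_nth[OF assms(2,3)] by (simp only: sum_delta)
    finally show ?thesis .
  qed
  finally show ?thesis by simp
qed

lemma inner:
  assumes "x1 ! i \<in> {1..V}"
  shows "(\<Sum>a\<in>{1..V}-{z!i}. cond_vel \<kappa> \<kappa>' t i a z x0 x1 * s a (z!i))
    = \<kappa>' t / (1 - \<kappa> t) * (if x1!i = z!i then 0 else s (x1!i) (z!i))"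
proof -
  have "(\<Sum>a\<in>{1..V}-{z!i}. cond_vel \<kappa> \<kappa>' t i a z x0 x1 * s a (z!i))
      = (\<Sum>a\<in>{1..V}-{z!i}. \<kappa>' t / (1 - \<kappa> t) * (if x1!i = a then s a (z!i) else 0))"
    by (intro sum.cong refl) (auto simp: cond_vel_def delta_def)
  also have "\<dots> = \<kappa>' t / (1 - \<kappa> t) * (if x1!i = z!i then 0 else s (x1!i) (z!i))"
  proof -
    have "(\<Sum>a\<in>{1..V}-{z!i}. (if x1!i = a then s a (z!i) else 0)) = (if x1!i = z!i then 0 else s (x1!i) (z!i))"
      using assms by (simp add: sum.delta')
    then show ?thesis by (simp only: sum_distrib_left[symmetric])
  qed
  finally show ?thesis .
qed

lemma swap3: "(\<Sum>a\<in>A. \<Sum>x\<in>B. \<Sum>y\<in>C. f a x y) = (\<Sum>x\<in>B. \<Sum>y\<in>C. \<Sum>a\<in>A. (f a x y :: real))"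
proof -
  have "(\<Sum>a\<in>A. \<Sum>x\<in>B. \<Sum>y\<in>C. f a x y) = (\<Sum>x\<in>B. \<Sum>a\<in>A. \<Sum>y\<in>C. f a x y)" by (rule sum.swap)
  also have "\<dots> = (\<Sum>x\<in>B. \<Sum>y\<in>C. \<Sum>a\<in>A. f a x y)" by (rule sum.cong[OF refl], rule sum.swap)
  finally show ?thesis .
qed

lemma swap4: "(\<Sum>i\<in>I. \<Sum>a\<in>A i. \<Sum>x\<in>B. \<Sum>y\<in>C. f i a x y) = (\<Sum>x\<in>B. \<Sum>y\<in>C. \<Sum>i\<in>I. \<Sum>a\<in>A i. (f i a x y :: real))"
proof -
  have "(\<Sum>i\<in>I. \<Sum>a\<in>A i. \<Sum>x\<in>B. \<Sum>y\<in>C. f i a x y) = (\<Sum>i\<in>I. \<Sum>x\<in>B. \<Sum>y\<in>C. \<Sum>a\<in>A i. f i a x y)"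
    by (rule sum.cong[OF refl], rule swap3)
  also have "\<dots> = (\<Sum>x\<in>B. \<Sum>y\<in>C. \<Sum>i\<in>I. \<Sum>a\<in>A i. f i a x y)" by (rule swap3)
  finally show ?thesis .
qed

lemma pointwise:
  fixes \<pi> :: "nat list \<Rightarrow> nat list \<Rightarrow> real" and s :: "nat \<Rightarrow> nat \<Rightarrow> real"
  assumes pi: "\<And>x0 x1. x0 \<in> seqs V L \<Longrightarrow> x1 \<in> seqs V L \<Longrightarrow> \<pi> x0 x1 \<ge> 0"
    and k: "0 \<le> \<kappa> t" "\<kappa> t < 1"
    and s0: "\<And>a. a \<in> {1..V} \<Longrightarrow> s a a = 0"
    and ssym: "\<And>a b. a \<in> {1..V} \<Longrightarrow> b \<in> {1..V} \<Longrightarrow> s a b = s b a"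
  shows "(\<Sum>xt\<in>seqs V L. flow V L \<kappa> \<pi> t xt *
            (\<Sum>i<L. \<Sum>a\<in>{1..V} - {xt ! i}. vel V L \<kappa> \<kappa>' \<pi> t i a xt * s a (xt ! i)))
       = \<kappa>' t * (\<Sum>x0\<in>seqs V L. \<Sum>x1\<in>seqs V L. cost L s x0 x1 * \<pi> x0 x1)"
proof -
  let ?S = "seqs V L"
  let ?T = "\<lambda>xt i a x0 x1. cond_vel \<kappa> \<kappa>' t i a xt x0 x1 * cond_flow L \<kappa> t xt x0 x1 * \<pi> x0 x1 * s a (xt ! i)"
  let ?F = "\<lambda>x1 i b. \<kappa>' t / (1 - \<kappa> t) * (if x1!i = b then 0 else s (x1!i) b)"
  have "(\<Sum>xt\<in>?S. flow V L \<kappa> \<pi> t xt *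
            (\<Sum>i<L. \<Sum>a\<in>{1..V} - {xt ! i}. vel V L \<kappa> \<kappa>' \<pi> t i a xt * s a (xt ! i)))
     = (\<Sum>xt\<in>?S. \<Sum>i<L. \<Sum>a\<in>{1..V} - {xt ! i}. (flow V L \<kappa> \<pi> t xt * vel V L \<kappa> \<kappa>' \<pi> t i a xt) * s a (xt ! i))"
    by (simp only: sum_distrib_left mult.assoc)
  also have "\<dots> = (\<Sum>xt\<in>?S. \<Sum>i<L. \<Sum>a\<in>{1..V} - {xt ! i}. \<Sum>x0\<in>?S. \<Sum>x1\<in>?S. ?T xt i a x0 x1)"
    using k by (simp only: fv[OF pi] sum_distrib_right)
  also have "\<dots> = (\<Sum>xt\<in>?S. \<Sum>x0\<in>?S. \<Sum>x1\<in>?S. \<Sum>i<L. \<Sum>a\<in>{1..V} - {xt ! i}. ?T xt i a x0 x1)"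
    by (rule sum.cong[OF refl], rule swap4)
  also have "\<dots> = (\<Sum>x0\<in>?S. \<Sum>x1\<in>?S. \<Sum>xt\<in>?S. \<Sum>i<L. \<Sum>a\<in>{1..V} - {xt ! i}. ?T xt i a x0 x1)"
    by (rule swap3)
  also have "\<dots> = (\<Sum>x0\<in>?S. \<Sum>x1\<in>?S. \<Sum>i<L. \<Sum>xt\<in>?S. \<Sum>a\<in>{1..V} - {xt ! i}. ?T xt i a x0 x1)"
    by (intro sum.cong refl sum.swap)
  also have "\<dots> = (\<Sum>x0\<in>?S. \<Sum>x1\<in>?S. \<Sum>i<L. \<pi> x0 x1 * (\<Sum>xt\<in>?S. cond_flow L \<kappa> t xt x0 x1 * ?F x1 i (xt!i)))"
  proof (intro sum.cong refl)
    fix x0 x1 i assume x1: "x1 \<in> ?S" and i: "i \<in> {..<L}"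
    have eq: "(\<Sum>a\<in>{1..V} - {xt ! i}. ?T xt i a x0 x1) = \<pi> x0 x1 * (cond_flow L \<kappa> t xt x0 x1 * ?F x1 i (xt!i))" for xt
    proof -
    have "(\<Sum>a\<in>{1..V} - {xt ! i}. ?T xt i a x0 x1) = cond_flow L \<kappa> t xt x0 x1 * \<pi> x0 x1 *
       (\<Sum>a\<in>{1..V} - {xt ! i}. cond_vel \<kappa> \<kappa>' t i a xt x0 x1 * s a (xt ! i))"
      by (simp add: sum_distrib_left mult_ac)
    also have "\<dots> = cond_flow L \<kappa> t xt x0 x1 * \<pi> x0 x1 * ?F x1 i (xt!i)"
      using inner[where z=xt and s=s and \<kappa>=\<kappa> and t=t and \<kappa>'=\<kappa>', OF seqs_nth[OF x1]] i by simp
    finally have "(\<Sum>a\<in>{1..V} - {xt ! i}. ?T xt i a x0 x1) = \<pi> x0 x1 * (cond_flow L \<kappa> t xt x0 x1 * ?F x1 i (xt!i))"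
      by (simp only: mult_ac)
    then show ?thesis .
    qed
    show "(\<Sum>xt\<in>?S. \<Sum>a\<in>{1..V} - {xt ! i}. ?T xt i a x0 x1) = \<pi> x0 x1 * (\<Sum>xt\<in>?S. cond_flow L \<kappa> t xt x0 x1 * ?F x1 i (xt!i))"
      by (simp only: eq sum_distrib_left)
  qed
  also have "\<dots> = (\<Sum>x0\<in>?S. \<Sum>x1\<in>?S. \<Sum>i<L. \<pi> x0 x1 * (\<kappa>' t * s (x0!i) (x1!i)))"
  proof (intro sum.cong refl)
    fix x0 x1 i assume x0: "x0 \<in> ?S" and x1: "x1 \<in> ?S" and i: "i \<in> {..<L}"
    have a: "x0!i \<in> {1..V}" "x1!i \<in> {1..V}" using seqs_nth x0 x1 i by auto
    have "(\<Sum>xt\<in>?S. cond_flow L \<kappa> t xt x0 x1 * ?F x1 i (xt!i)) = (1 - \<kappa> t) * ?F x1 i (x0!i) + \<kappa> t * ?F x1 i (x1!i)"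
      using x0 x1 i by (intro marg2) auto
    also have "\<dots> = \<kappa>' t * s (x0!i) (x1!i)"
      using k a s0 ssym[OF a] by auto
    finally show "\<pi> x0 x1 * (\<Sum>xt\<in>?S. cond_flow L \<kappa> t xt x0 x1 * ?F x1 i (xt!i)) = \<pi> x0 x1 * (\<kappa>' t * s (x0!i) (x1!i))"
      by simp
  qed
  also have "\<dots> = \<kappa>' t * (\<Sum>x0\<in>?S. \<Sum>x1\<in>?S. cost L s x0 x1 * \<pi> x0 x1)"
    unfolding cost_def by (simp add: sum_distrib_left sum_distrib_right mult_ac)
  finally show ?thesis .
qed

theorem theorem1:
  fixes V L :: nat and \<pi> :: "nat list \<Rightarrow> nat list \<Rightarrow> real"
    and \<kappa> \<kappa>' :: "real \<Rightarrow> real" and s :: "nat \<Rightarrow> nat \<Rightarrow> real"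
  assumes "V \<ge> 1" and "L \<ge> 1"
    and pi_nonneg: "\<And>x0 x1. x0 \<in> seqs V L \<Longrightarrow> x1 \<in> seqs V L \<Longrightarrow> \<pi> x0 x1 \<ge> 0"
    and pi_sum: "(\<Sum>x0\<in>seqs V L. \<Sum>x1\<in>seqs V L. \<pi> x0 x1) = 1"
    and kappa_deriv: "\<And>t. t \<in> {0..1} \<Longrightarrow> (\<kappa> has_real_derivative \<kappa>' t) (at t within {0..1})"
    and kappa_range: "\<And>t. t \<in> {0..1} \<Longrightarrow> \<kappa> t \<in> {0..1}"
    and "\<kappa> 0 = 0" and "\<kappa> 1 = 1"
    and kappa_lt: "\<And>t. t \<in> {0..1} \<Longrightarrow> t < 1 \<Longrightarrow> \<kappa> t < 1"
    and s_nonneg: "\<And>a b. a \<in> {1..V} \<Longrightarrow> b \<in> {1..V} \<Longrightarrow> s a b \<ge> 0"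
    and s_zero: "\<And>a b. a \<in> {1..V} \<Longrightarrow> b \<in> {1..V} \<Longrightarrow> s a b = 0 \<longleftrightarrow> a = b"
    and s_sym: "\<And>a b. a \<in> {1..V} \<Longrightarrow> b \<in> {1..V} \<Longrightarrow> s a b = s b a"
    and s_tri: "\<And>a b c. a \<in> {1..V} \<Longrightarrow> b \<in> {1..V} \<Longrightarrow> c \<in> {1..V} \<Longrightarrow> s a c \<le> s a b + s b c"
  shows "((\<lambda>t. \<Sum>xt\<in>seqs V L. flow V L \<kappa> \<pi> t xt *
            (\<Sum>i<L. \<Sum>a\<in>{1..V} - {xt ! i}. vel V L \<kappa> \<kappa>' \<pi> t i a xt * s a (xt ! i)))
         has_integral (\<Sum>x0\<in>seqs V L. \<Sum>x1\<in>seqs V L. cost L s x0 x1 * \<pi> x0 x1)) {0..1}"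
proof -
  let ?C = "\<Sum>x0\<in>seqs V L. \<Sum>x1\<in>seqs V L. cost L s x0 x1 * \<pi> x0 x1"
  have D: "(\<kappa> has_vector_derivative \<kappa>' t) (at t within {0..1})" if "t \<in> {0..1}" for t :: real
    using kappa_deriv[OF that] by (simp only: has_real_derivative_iff_has_vector_derivative)
  have "(\<kappa>' has_integral (\<kappa> 1 - \<kappa> 0)) {0..1}"
    by (rule fundamental_theorem_of_calculus[OF _ D]) simp_all
  then have "((\<lambda>t. \<kappa>' t * ?C) has_integral ((\<kappa> 1 - \<kappa> 0) * ?C)) {0..1}"
    by (rule has_integral_mult_left)
  then have I: "((\<lambda>t. \<kappa>' t * ?C) has_integral ?C) {0..1}" using assms(7,8) by simp
  have s0: "\<And>a. a \<in> {1..V} \<Longrightarrow> s a a = 0" using s_zero by blast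
  show ?thesis
  proof (rule has_integral_spike_finite[OF _ _ I, of "{1}"])
    fix t :: real assume t: "t \<in> {0..1} - {1}"
    then have k: "0 \<le> \<kappa> t" "\<kappa> t < 1" using kappa_range kappa_lt by auto
    show "(\<Sum>xt\<in>seqs V L. flow V L \<kappa> \<pi> t xt *
            (\<Sum>i<L. \<Sum>a\<in>{1..V} - {xt ! i}. vel V L \<kappa> \<kappa>' \<pi> t i a xt * s a (xt ! i))) = \<kappa>' t * ?C"
      by (rule pointwise[where \<kappa>=\<kappa> and t=t, OF pi_nonneg k s0 s_sym])
  qed simp
qed

end
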